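(* Let $\Gamma$ be a countable discrete group and $\mu$ a symmetric, generating probability measure on $\Gamma$. Suppose there is a unitary $V\in\mathcal B(\ell^2(\Gamma))$ with $\mathcal P_\mu(V)=-V$. Then $\{T\in\mathcal B(\ell^2(\Gamma)):\mathcal P_\mu(T)=-T\}=\{AV: A\in\mathcal B(\ell^2(\Gamma)),\ \mathcal P_\mu(A)=A\}$.
   Context: $\rho$ denotes the right regular representation of $\Gamma$ on $\ell^2(\Gamma)$, $\rho_g\delta_x=\delta_{xg^{-1}}$, and $\mathcal P_\mu(T)=\sum_g\mu(g)\rho_gT\rho_g^*$ on $\mathcal B(\ell^2(\Gamma))$. $\mu$ symmetric: $\mu(g)=\mu(g^{-1})$; generating: its support generates $\Gamma$ as a group. *)

theory Defs
  imports "HOL-Analysis.Analysis"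
begin

text \<open>The group \<Gamma> is a type of class group_add (written additively, not necessarily
  commutative) that is countable.\<close>

definition ell2 :: "('g \<Rightarrow> complex) set" where
  "ell2 = {f. (\<lambda>x. (cmod (f x))\<^sup>2) summable_on UNIV}"

definition ell2_norm :: "('g \<Rightarrow> complex) \<Rightarrow> real" where
  "ell2_norm f = sqrt (infsum (\<lambda>x. (cmod (f x))\<^sup>2) UNIV)"

definition ell2_inner :: "('g \<Rightarrow> complex) \<Rightarrow> ('g \<Rightarrow> complex) \<Rightarrow> complex" where
  "ell2_inner f g = infsum (\<lambda>x. cnj (f x) * g x) UNIV"

text \<open>Bounded operators on \<ell>^2(\<Gamma>), represented by maps on all functions that are
  linear and bounded on \<ell>^2, map \<ell>^2 into \<ell>^2, and (canonical representative)
  vanish outside \<ell>^2.\<close>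

definition bounded_op :: "(('g \<Rightarrow> complex) \<Rightarrow> ('g \<Rightarrow> complex)) \<Rightarrow> bool" where
  "bounded_op T \<longleftrightarrow>
     (\<forall>f\<in>ell2. T f \<in> ell2) \<and>
     (\<forall>f\<in>ell2. \<forall>g\<in>ell2. \<forall>a b. T (\<lambda>x. a * f x + b * g x) = (\<lambda>x. a * T f x + b * T g x)) \<and>
     (\<exists>C. \<forall>f\<in>ell2. ell2_norm (T f) \<le> C * ell2_norm f) \<and>
     (\<forall>f. f \<notin> ell2 \<longrightarrow> T f = (\<lambda>x. 0))"

definition is_adjoint :: "(('g \<Rightarrow> complex) \<Rightarrow> ('g \<Rightarrow> complex)) \<Rightarrow> (('g \<Rightarrow> complex) \<Rightarrow> ('g \<Rightarrow> complex)) \<Rightarrow> bool" where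
  "is_adjoint T S \<longleftrightarrow> (\<forall>f\<in>ell2. \<forall>g\<in>ell2. ell2_inner (T f) g = ell2_inner f (S g))"

definition unitary_op :: "(('g \<Rightarrow> complex) \<Rightarrow> ('g \<Rightarrow> complex)) \<Rightarrow> bool" where
  "unitary_op V \<longleftrightarrow> bounded_op V \<and>
     (\<exists>W. bounded_op W \<and> is_adjoint V W \<and> (\<forall>f\<in>ell2. W (V f) = f \<and> V (W f) = f))"

text \<open>Right regular representation: \<rho>_g \<delta>_x = \<delta>_{x g^{-1}}, i.e. (\<rho>_g f)(y) = f(y g);
  its adjoint is \<rho>_{g^{-1}}, (\<rho>_g^* f)(y) = f(y g^{-1}).\<close>
definition rho :: "'g::group_add \<Rightarrow> ('g \<Rightarrow> complex) \<Rightarrow> ('g \<Rightarrow> complex)" where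
  "rho g f = (if f \<in> ell2 then (\<lambda>y. f (y + g)) else (\<lambda>y. 0))"

definition rho_adj :: "'g::group_add \<Rightarrow> ('g \<Rightarrow> complex) \<Rightarrow> ('g \<Rightarrow> complex)" where
  "rho_adj g f = (if f \<in> ell2 then (\<lambda>y. f (y - g)) else (\<lambda>y. 0))"

text \<open>The Markov operator P_\<mu>(T) = \<Sum>_g \<mu>(g) \<rho>_g T \<rho>_g^*; the series converges
  absolutely in operator norm, hence coordinatewise, which is how it is evaluated here.\<close>
definition markov_op :: "('g::group_add \<Rightarrow> real) \<Rightarrow> (('g \<Rightarrow> complex) \<Rightarrow> ('g \<Rightarrow> complex))
    \<Rightarrow> (('g \<Rightarrow> complex) \<Rightarrow> ('g \<Rightarrow> complex))" where
  "markov_op \<mu> T f = (if f \<in> ell2 then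
      (\<lambda>y. infsum (\<lambda>g. complex_of_real (\<mu> g) * rho g (T (rho_adj g f)) y) UNIV)
    else (\<lambda>y. 0))"

inductive_set gen_subgroup :: "'g::group_add set \<Rightarrow> 'g set" for S where
  zero: "0 \<in> gen_subgroup S"
| base: "s \<in> S \<Longrightarrow> s \<in> gen_subgroup S"
| add: "a \<in> gen_subgroup S \<Longrightarrow> b \<in> gen_subgroup S \<Longrightarrow> a + b \<in> gen_subgroup S"
| neg: "a \<in> gen_subgroup S \<Longrightarrow> - a \<in> gen_subgroup S"

definition prob_measure :: "('g \<Rightarrow> real) \<Rightarrow> bool" where
  "prob_measure \<mu> \<longleftrightarrow> (\<forall>g. 0 \<le> \<mu> g) \<and> (\<mu> has_sum 1) UNIV"

definition symmetric_measure :: "('g::group_add \<Rightarrow> real) \<Rightarrow> bool" where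
  "symmetric_measure \<mu> \<longleftrightarrow> (\<forall>g. \<mu> g = \<mu> (- g))"

definition generating_measure :: "('g::group_add \<Rightarrow> real) \<Rightarrow> bool" where
  "generating_measure \<mu> \<longleftrightarrow> gen_subgroup {g. \<mu> g \<noteq> 0} = UNIV"

end

theory Submission
  imports Defs
begin


lemma ell2_zero: "(\<lambda>x. 0) \<in> ell2"
  by (simp add: ell2_def)

lemma ell2_uminus_iff: "(\<lambda>y. - x y) \<in> ell2 \<longleftrightarrow> x \<in> ell2"
  by (simp add: ell2_def)

lemma ell2_shift: "x \<in> ell2 \<Longrightarrow> (\<lambda>y. x (y + (g::'g::group_add))) \<in> ell2"
proof -
  assume "x \<in> ell2"
  hence s: "(\<lambda>y. (cmod (x y))\<^sup>2) summable_on UNIV" by (simp add: ell2_def)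
  have b: "bij_betw (\<lambda>y. y + g) UNIV UNIV"
    by (rule bij_betwI[where g="\<lambda>y. y - g"]) auto
  show ?thesis using summable_on_reindex_bij_betw[OF b, of "\<lambda>y. (cmod (x y))\<^sup>2"] s
    by (simp add: ell2_def)
qed

lemma norm2_shift: "infsum (\<lambda>y. (cmod (x (y + (g::'g::group_add))))\<^sup>2) UNIV = infsum (\<lambda>y. (cmod (x y))\<^sup>2) UNIV"
proof -
  have b: "bij_betw (\<lambda>y. y + g) UNIV UNIV"
    by (rule bij_betwI[where g="\<lambda>y. y - g"]) auto
  show ?thesis using infsum_reindex_bij_betw[OF b, of "\<lambda>y. (cmod (x y))\<^sup>2"] by simp
qed

lemma rho_ell2: "x \<in> ell2 \<Longrightarrow> rho g x \<in> ell2"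
  by (simp add: rho_def ell2_shift)

lemma rho_adj_ell2: "x \<in> ell2 \<Longrightarrow> rho_adj g x \<in> ell2"
  using ell2_shift[of x "-g"] by (simp add: rho_adj_def)

lemma rho_rho_adj: "x \<in> ell2 \<Longrightarrow> rho g (rho_adj g x) = x"
  using rho_adj_ell2[of x g] by (simp add: rho_def rho_adj_def)

lemma rho_adj_rho: "x \<in> ell2 \<Longrightarrow> rho_adj g (rho g x) = x"
  using rho_ell2[of x g] by (simp add: rho_def rho_adj_def)

lemma rho_uminus: "rho g (\<lambda>y. - x y) = (\<lambda>y. - rho g x y)"
  by (auto simp: rho_def ell2_uminus_iff)

lemma rho_adj_uminus: "rho_adj g (\<lambda>y. - x y) = (\<lambda>y. - rho_adj g x y)"
  by (auto simp: rho_adj_def ell2_uminus_iff)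

lemma norm2_rho: "x \<in> ell2 \<Longrightarrow> infsum (\<lambda>y. (cmod (rho g x y))\<^sup>2) UNIV = infsum (\<lambda>y. (cmod (x y))\<^sup>2) UNIV"
  by (simp add: rho_def norm2_shift)

lemma norm2_rho_adj: "x \<in> ell2 \<Longrightarrow> infsum (\<lambda>y. (cmod (rho_adj g x y))\<^sup>2) UNIV = infsum (\<lambda>y. (cmod (x y))\<^sup>2) UNIV"
  using norm2_shift[of x "-g"] by (simp add: rho_adj_def)

type_synonym 'g op = "('g \<Rightarrow> complex) \<Rightarrow> ('g \<Rightarrow> complex)"

lemma bop_zero: fixes T :: "'g op" shows "bounded_op T \<Longrightarrow> T (\<lambda>x. 0) = (\<lambda>x. 0)"
proof -
  assume "bounded_op T"
  hence "\<forall>f\<in>ell2. \<forall>g\<in>ell2. \<forall>a b. T (\<lambda>x. a * f x + b * g x) = (\<lambda>x. a * T f x + b * T g x)"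
    unfolding bounded_op_def by blast
  from this[rule_format, OF ell2_zero ell2_zero, of 0 0] show ?thesis by simp
qed

lemma bop_uminus: fixes T :: "'g op" shows "bounded_op T \<Longrightarrow> T (\<lambda>y. - x y) = (\<lambda>y. - T x y)"
proof (cases "x \<in> ell2")
  case True
  assume "bounded_op T"
  hence "T (\<lambda>y. (-1) * x y + 0 * x y) = (\<lambda>y. (-1) * T x y + 0 * T x y)"
    unfolding bounded_op_def using True by blast
  thus ?thesis by simp
next
  case False
  assume "bounded_op T"
  thus ?thesis using False ell2_uminus_iff[of x] unfolding bounded_op_def by auto
qed

lemma ell2_norm_nonneg: "ell2_norm f \<ge> 0"
  unfolding ell2_norm_def by (simp add: infsum_nonneg)

lemma bop_comp: fixes A B :: "'g op" assumes A: "bounded_op A" and B: "bounded_op B" shows "bounded_op (A \<circ> B)"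
proof -
  have e: "\<forall>f\<in>ell2. A f \<in> ell2" "\<forall>f\<in>ell2. B f \<in> ell2" using A B unfolding bounded_op_def by auto
  have lA: "\<forall>f::'g \<Rightarrow> complex\<in>ell2. \<forall>g\<in>ell2. \<forall>a b. A (\<lambda>x. a * f x + b * g x) = (\<lambda>x. a * A f x + b * A g x)"
    and lB: "\<forall>f::'g \<Rightarrow> complex\<in>ell2. \<forall>g\<in>ell2. \<forall>a b. B (\<lambda>x. a * f x + b * g x) = (\<lambda>x. a * B f x + b * B g x)"
    using A B unfolding bounded_op_def by auto
  obtain C1 where C1: "\<forall>f\<in>ell2. ell2_norm (A f) \<le> C1 * ell2_norm f" using A unfolding bounded_op_def by auto
  obtain C2 where C2: "\<forall>f\<in>ell2. ell2_norm (B f) \<le> C2 * ell2_norm f" using B unfolding bounded_op_def by auto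
  have bd: "\<forall>f\<in>ell2. ell2_norm (A (B f)) \<le> (max C1 0 * C2) * ell2_norm f"
  proof
    fix f :: "'g \<Rightarrow> complex" assume f: "f \<in> ell2"
    have "ell2_norm (A (B f)) \<le> C1 * ell2_norm (B f)" using C1 e f by auto
    also have "\<dots> \<le> max C1 0 * ell2_norm (B f)" using ell2_norm_nonneg[of "B f"]
      by (simp add: mult_right_mono)
    also have "\<dots> \<le> max C1 0 * (C2 * ell2_norm f)" using C2 f by (simp add: mult_left_mono)
    finally show "ell2_norm (A (B f)) \<le> (max C1 0 * C2) * ell2_norm f" by simp
  qed
  show ?thesis unfolding bounded_op_def
  proof (intro conjI)
    show "\<forall>f\<in>ell2. (A \<circ> B) f \<in> ell2" using e by auto
    show "\<forall>f\<in>ell2. \<forall>g\<in>ell2. \<forall>a b. (A \<circ> B) (\<lambda>x. a * f x + b * g x) = (\<lambda>x. a * (A \<circ> B) f x + b * (A \<circ> B) g x)"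
      using lA lB e by auto
    show "\<exists>C. \<forall>f\<in>ell2. ell2_norm ((A \<circ> B) f) \<le> C * ell2_norm f" using bd by auto
    show "\<forall>f. f \<notin> ell2 \<longrightarrow> (A \<circ> B) f = (\<lambda>x. 0)"
      using A B bop_zero[OF A] unfolding bounded_op_def by auto
  qed
qed



definition norm2 :: "('g \<Rightarrow> complex) \<Rightarrow> real" where
  "norm2 x = infsum (\<lambda>y. (cmod (x y))\<^sup>2) UNIV"

lemma norm2_nonneg: "norm2 x \<ge> 0"
  unfolding norm2_def by (simp add: infsum_nonneg)

lemma prod_le: "cmod a * cmod b \<le> ((cmod a)\<^sup>2 + (cmod b)\<^sup>2) / 2"
proof -
  have "0 \<le> (cmod a - cmod b)\<^sup>2" by simp
  thus ?thesis by (simp add: power2_eq_square algebra_simps)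
qed

lemma prod_summable:
  assumes a: "a \<in> ell2" and b: "b \<in> ell2"
  shows "(\<lambda>y. cmod (a y) * cmod (b y)) summable_on UNIV"
    and "infsum (\<lambda>y. cmod (a y) * cmod (b y)) UNIV \<le> (norm2 a + norm2 b) / 2"
proof -
  have sa: "(\<lambda>y. (cmod (a y))\<^sup>2) summable_on UNIV" and sb: "(\<lambda>y. (cmod (b y))\<^sup>2) summable_on UNIV"
    using a b by (auto simp: ell2_def)
  have sab: "(\<lambda>y. ((cmod (a y))\<^sup>2 + (cmod (b y))\<^sup>2) / 2) summable_on UNIV"
    using summable_on_cmult_left[OF summable_on_add[OF sa sb], of "1/2"] by simp
  show s: "(\<lambda>y. cmod (a y) * cmod (b y)) summable_on UNIV"
    by (rule summable_on_comparison_test[OF sab]) (use prod_le in auto)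
  have "infsum (\<lambda>y. cmod (a y) * cmod (b y)) UNIV \<le> infsum (\<lambda>y. ((cmod (a y))\<^sup>2 + (cmod (b y))\<^sup>2) / 2) UNIV"
    by (rule infsum_mono[OF s sab]) (rule prod_le)
  also have "\<dots> = (norm2 a + norm2 b) / 2"
    unfolding norm2_def using infsum_add[OF sa sb] infsum_cmult_left[OF summable_on_add[OF sa sb], of "1/2"]
    by simp
  finally show "infsum (\<lambda>y. cmod (a y) * cmod (b y)) UNIV \<le> (norm2 a + norm2 b) / 2" .
qed

lemma inner_summable:
  assumes a: "a \<in> ell2" and b: "b \<in> ell2"
  shows "(\<lambda>y. cnj (a y) * b y) summable_on UNIV"
proof -
  have "(\<lambda>y. norm (cnj (a y) * b y)) summable_on UNIV"
    by (rule Infinite_Sum.abs_summable_on_comparison_test'[OF prod_summable(1)[OF a b]]) (simp add: norm_mult)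
  then show ?thesis by (rule abs_summable_summable)
qed

lemma inner_self: assumes k: "k \<in> ell2" shows "ell2_inner k k = of_real (norm2 k)"
proof -
  have s: "(\<lambda>y. (cmod (k y))\<^sup>2) summable_on UNIV" using k by (simp add: ell2_def)
  have "((\<lambda>y. of_real ((cmod (k y))\<^sup>2) :: complex) has_sum of_real (norm2 k)) UNIV"
    unfolding norm2_def by (rule has_sum_of_real) (use s in auto)
  moreover have "(\<lambda>y. of_real ((cmod (k y))\<^sup>2) :: complex) = (\<lambda>y. cnj (k y) * k y)"
  proof
    fix y show "(of_real ((cmod (k y))\<^sup>2) :: complex) = cnj (k y) * k y"
      using complex_norm_square[of "k y"] by (metis mult.commute)
  qed
  ultimately show ?thesis unfolding ell2_inner_def by (simp add: infsumI)
qed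

lemma isometry:
  fixes V W :: "'g op"
  assumes bV: "bounded_op V" and adj: "is_adjoint V W" and inv: "\<forall>f\<in>ell2. W (V f) = f"
    and k: "k \<in> ell2"
  shows "norm2 (V k) = norm2 k"
proof -
  have Vk: "V k \<in> ell2" using bV k unfolding bounded_op_def by auto
  have "ell2_inner (V k) (V k) = ell2_inner k (W (V k))" using adj k Vk unfolding is_adjoint_def by auto
  also have "\<dots> = ell2_inner k k" using inv k by auto
  finally show ?thesis using inner_self[OF k] inner_self[OF Vk] by simp
qed

lemma cmod_add_sq: "(cmod (a + b))\<^sup>2 = (cmod a)\<^sup>2 + (cmod b)\<^sup>2 + 2 * Re (cnj b * a)"
  by (simp only: cmod_power2) (simp add: power2_eq_square algebra_simps)



lemma key:
  fixes \<mu> :: "'g::group_add \<Rightarrow> real" and V W :: "'g op"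
  assumes pm: "prob_measure \<mu>" and bV: "bounded_op V" and adj: "is_adjoint V W"
    and inv: "\<forall>f\<in>ell2. W (V f) = f"
    and mk: "markov_op \<mu> V = (\<lambda>f y. - V f y)"
    and f: "f \<in> ell2" and mg: "\<mu> g0 \<noteq> 0"
  shows "rho g0 (V (rho_adj g0 f)) = (\<lambda>y. - V f y)"
proof -
  define u where "u = V f"
  define h where "h = (\<lambda>g. rho g (V (rho_adj g f)))"
  define N where "N = norm2 f"
  have Vell: "\<And>k. k \<in> ell2 \<Longrightarrow> V k \<in> ell2" using bV unfolding bounded_op_def by auto
  have u: "u \<in> ell2" "norm2 u = N" unfolding u_def N_def using Vell f isometry[OF bV adj inv f] by auto
  have h: "h g \<in> ell2" "norm2 (h g) = N" for g
  proof -
    have r: "rho_adj g f \<in> ell2" using rho_adj_ell2 f by blast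
    show "h g \<in> ell2" unfolding h_def using rho_ell2 Vell r by blast
    have "norm2 (h g) = norm2 (V (rho_adj g f))" unfolding h_def norm2_def using norm2_rho Vell r by blast
    also have "\<dots> = norm2 (rho_adj g f)" using isometry[OF bV adj inv r] .
    also have "\<dots> = N" unfolding N_def norm2_def using norm2_rho_adj f by blast
    finally show "norm2 (h g) = N" .
  qed
  have c: "infsum (\<lambda>g. of_real (\<mu> g) * h g y) UNIV = - u y" for y
  proof -
    have "markov_op \<mu> V f y = - V f y" using mk by simp
    thus ?thesis unfolding markov_op_def h_def u_def using f by simp
  qed
  have \<mu>0: "\<mu> g \<ge> 0" for g using pm unfolding prob_measure_def by auto
  have \<mu>1: "(\<mu> has_sum 1) UNIV" using pm unfolding prob_measure_def by auto
  have N0: "N \<ge> 0" unfolding N_def by (rule norm2_nonneg)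
  define F where "F = (\<lambda>g y. of_real (\<mu> g) * (cnj (u y) * h g y))"
  have pb: "(\<lambda>y. cmod (u y) * cmod (h g y)) summable_on UNIV"
     "infsum (\<lambda>y. cmod (u y) * cmod (h g y)) UNIV \<le> N" for g
    using prod_summable[OF u(1) h(1)[of g]] u(2) h(2)[of g] by auto
  have nF: "norm (F g y) = \<mu> g * (cmod (u y) * cmod (h g y))" for g y
    unfolding F_def using \<mu>0[of g] by (simp add: norm_mult)
  have Fs: "(\<lambda>(g,y). F g y) summable_on UNIV \<times> UNIV"
  proof -
    let ?f = "\<lambda>p. F (fst p) (snd p)"
    have i: "(\<lambda>y. norm (?f (g, y))) summable_on UNIV" for g
      unfolding nF by (simp add: pb(1) summable_on_cmult_right)
    have ii: "(\<lambda>g. norm (infsum (\<lambda>y. norm (?f (g, y))) UNIV)) summable_on UNIV"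
    proof (rule Infinite_Sum.abs_summable_on_comparison_test')
      show "(\<lambda>g. \<mu> g * N) summable_on UNIV"
        using \<mu>1 by (intro summable_on_cmult_left) (auto simp: summable_on_def)
      fix g :: 'g assume "g \<in> UNIV"
      have "infsum (\<lambda>y. norm (?f (g, y))) UNIV = \<mu> g * infsum (\<lambda>y. cmod (u y) * cmod (h g y)) UNIV"
        unfolding nF by (simp add: infsum_cmult_right')
      moreover have "\<mu> g * infsum (\<lambda>y. cmod (u y) * cmod (h g y)) UNIV \<le> \<mu> g * N"
        using pb(2)[of g] \<mu>0[of g] by (simp add: mult_left_mono)
      moreover have "0 \<le> infsum (\<lambda>y. cmod (u y) * cmod (h g y)) UNIV" by (simp add: infsum_nonneg)
      ultimately show "(norm (infsum (\<lambda>y. norm (?f (g, y))) UNIV)) \<le> \<mu> g * N"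
        using \<mu>0[of g] by simp
    qed
    have "(\<lambda>p. norm (?f p)) summable_on Sigma UNIV (\<lambda>_. UNIV)"
      using Infinite_Sum.abs_summable_on_Sigma_iff[where f="?f" and A=UNIV and B="\<lambda>_. UNIV"] i ii by auto
    hence "?f summable_on Sigma UNIV (\<lambda>_. UNIV)" by (rule abs_summable_summable)
    thus ?thesis by (simp add: case_prod_unfold)
  qed
  define ip where "ip = (\<lambda>g. infsum (\<lambda>y. cnj (u y) * h g y) UNIV)"
  have inner: "infsum (\<lambda>y. F g y) UNIV = of_real (\<mu> g) * ip g" for g
    unfolding F_def ip_def by (simp add: infsum_cmult_right')
  have swap: "infsum (\<lambda>g. infsum (\<lambda>y. F g y) UNIV) UNIV = infsum (\<lambda>y. infsum (\<lambda>g. F g y) UNIV) UNIV"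
    by (rule infsum_swap_banach[OF Fs])
  have outer: "infsum (\<lambda>g. F g y) UNIV = - of_real ((cmod (u y))\<^sup>2)" for y
  proof -
    have "infsum (\<lambda>g. F g y) UNIV = infsum (\<lambda>g. cnj (u y) * (of_real (\<mu> g) * h g y)) UNIV"
      unfolding F_def by (simp add: algebra_simps)
    also have "\<dots> = cnj (u y) * (- u y)" by (simp add: infsum_cmult_right' c)
    also have "\<dots> = - of_real ((cmod (u y))\<^sup>2)" using complex_norm_square[of "u y"] by (simp add: mult.commute)
    finally show ?thesis .
  qed
  have us: "(\<lambda>y. (cmod (u y))\<^sup>2) summable_on UNIV" using u(1) by (simp add: ell2_def)
  have "((\<lambda>y. of_real ((cmod (u y))\<^sup>2) :: complex) has_sum of_real N) UNIV"
    using has_sum_of_real[OF us[THEN has_sum_infsum]] u(2) by (simp add: norm2_def)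
  hence "((\<lambda>y. - of_real ((cmod (u y))\<^sup>2) :: complex) has_sum - of_real N) UNIV"
    by (simp add: has_sum_uminus)
  hence "infsum (\<lambda>y. infsum (\<lambda>g. F g y) UNIV) UNIV = - of_real N"
    unfolding outer by (rule infsumI)
  moreover have Gs: "(\<lambda>g. infsum (F g) UNIV) summable_on UNIV" using summable_on_Sigma_banach[OF Fs] by simp
  ultimately have "((\<lambda>g. infsum (F g) UNIV) has_sum - of_real N) UNIV"
    using swap has_sum_infsum[OF Gs] by simp
  hence S: "((\<lambda>g. of_real (\<mu> g) * ip g) has_sum - of_real N) UNIV"
    using inner by simp
  have ReS: "((\<lambda>g. \<mu> g * Re (ip g)) has_sum - N) UNIV"
    using has_sum_Re[OF S] by simp
  have n2: "(\<lambda>y. (cmod (h g y + u y))\<^sup>2) summable_on UNIV \<and> norm2 (\<lambda>y. h g y + u y) = 2 * N + 2 * Re (ip g)" for g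
  proof -
    have pw: "(\<lambda>y. (cmod (h g y + u y))\<^sup>2) = (\<lambda>y. ((cmod (h g y))\<^sup>2 + (cmod (u y))\<^sup>2) + 2 * Re (cnj (u y) * h g y))"
      by (simp add: cmod_add_sq)
    have s1: "(\<lambda>y. (cmod (h g y))\<^sup>2) summable_on UNIV" using h(1)[of g] by (simp add: ell2_def)
    have ips: "(\<lambda>y. cnj (u y) * h g y) summable_on UNIV" by (rule inner_summable[OF u(1) h(1)])
    have s3: "(\<lambda>y. 2 * Re (cnj (u y) * h g y)) summable_on UNIV"
      by (rule summable_on_cmult_right) (rule summable_on_Re[OF ips])
    have s12: "(\<lambda>y. (cmod (h g y))\<^sup>2 + (cmod (u y))\<^sup>2) summable_on UNIV"
      by (rule summable_on_add[OF s1 us])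
    show ?thesis
    proof
      show "(\<lambda>y. (cmod (h g y + u y))\<^sup>2) summable_on UNIV"
        unfolding pw by (rule summable_on_add[OF s12 s3])
      have "norm2 (\<lambda>y. h g y + u y) = infsum (\<lambda>y. (cmod (h g y))\<^sup>2 + (cmod (u y))\<^sup>2) UNIV + infsum (\<lambda>y. 2 * Re (cnj (u y) * h g y)) UNIV"
        unfolding norm2_def pw by (rule infsum_add[OF s12 s3])
      also have "\<dots> = norm2 (h g) + norm2 u + 2 * Re (ip g)"
      proof -
        have e3: "infsum (\<lambda>y. 2 * Re (cnj (u y) * h g y)) UNIV = 2 * Re (ip g)"
          unfolding ip_def by (subst infsum_cmult_right[OF summable_on_Re[OF ips]]) (subst infsum_Re[OF ips], rule refl)
        show ?thesis unfolding e3 norm2_def by (subst infsum_add[OF s1 us], rule refl)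
      qed
      finally show "norm2 (\<lambda>y. h g y + u y) = 2 * N + 2 * Re (ip g)" using h(2)[of g] u(2) by simp
    qed
  qed
  have a: "((\<lambda>g. \<mu> g * (2 * N)) has_sum 1 * (2 * N)) UNIV" by (rule has_sum_cmult_left[OF \<mu>1])
  have b: "((\<lambda>g. 2 * (\<mu> g * Re (ip g))) has_sum 2 * (- N)) UNIV" by (rule has_sum_cmult_right[OF ReS])
  have "((\<lambda>g. \<mu> g * (2 * N) + 2 * (\<mu> g * Re (ip g))) has_sum 1 * (2 * N) + 2 * (- N)) UNIV"
    by (rule has_sum_add[OF a b])
  moreover have "(\<lambda>g. \<mu> g * (2 * N) + 2 * (\<mu> g * Re (ip g))) = (\<lambda>g. \<mu> g * norm2 (\<lambda>y. h g y + u y))"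
    using n2 by (simp add: algebra_simps)
  ultimately have T: "((\<lambda>g. \<mu> g * norm2 (\<lambda>y. h g y + u y)) has_sum 0) UNIV" by simp
  have "\<mu> g0 * norm2 (\<lambda>y. h g0 y + u y) = 0"
    by (rule nonneg_has_sum_le_0D[OF T]) (auto intro!: mult_nonneg_nonneg \<mu>0 norm2_nonneg)
  hence z: "infsum (\<lambda>y. (cmod (h g0 y + u y))\<^sup>2) UNIV \<le> 0" using mg unfolding norm2_def by simp
  have "(cmod (h g0 y + u y))\<^sup>2 = 0" for y
    by (rule nonneg_infsum_le_0D[OF z]) (use n2 in auto)
  hence "h g0 y = - u y" for y by (simp add: add_eq_0_iff2)
  thus ?thesis unfolding h_def u_def by auto
qed



theorem proposition3p5:
  fixes \<mu> :: "'g::{group_add, countable} \<Rightarrow> real"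
    and V :: "('g \<Rightarrow> complex) \<Rightarrow> ('g \<Rightarrow> complex)"
  assumes "prob_measure \<mu>" and "symmetric_measure \<mu>" and "generating_measure \<mu>"
    and "unitary_op V"
    and "markov_op \<mu> V = (\<lambda>f y. - V f y)"
  shows "{T. bounded_op T \<and> markov_op \<mu> T = (\<lambda>f y. - T f y)}
       = {A \<circ> V | A. bounded_op A \<and> markov_op \<mu> A = A}"
proof -
  obtain W where bW: "bounded_op W" and adj: "is_adjoint V W"
    and inv: "\<forall>f\<in>ell2. W (V f) = f \<and> V (W f) = f"
    using assms(4) unfolding unitary_op_def by auto
  have bV: "bounded_op V" using assms(4) unfolding unitary_op_def by auto
  have inv1: "\<forall>f\<in>ell2. W (V f) = f" using inv by auto
  have Vell: "\<And>k. k \<in> ell2 \<Longrightarrow> V k \<in> ell2" using bV unfolding bounded_op_def by auto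
  have Well: "\<And>k. k \<in> ell2 \<Longrightarrow> W k \<in> ell2" using bW unfolding bounded_op_def by auto
  have V0: "\<And>k. k \<notin> ell2 \<Longrightarrow> V k = (\<lambda>x. 0)" using bV unfolding bounded_op_def by auto
  have W0: "\<And>k. k \<notin> ell2 \<Longrightarrow> W k = (\<lambda>x. 0)" using bW unfolding bounded_op_def by auto
  have K: "\<And>g k. \<mu> g \<noteq> 0 \<Longrightarrow> k \<in> ell2 \<Longrightarrow> rho g (V (rho_adj g k)) = (\<lambda>y. - V k y)"
    using key[OF assms(1) bV adj inv1 assms(5)] by blast
  have K': "V (rho_adj g k) = (\<lambda>y. - rho_adj g (V k) y)" if "\<mu> g \<noteq> 0" "k \<in> ell2" for g k
  proof -
    have "V (rho_adj g k) = rho_adj g (rho g (V (rho_adj g k)))"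
      using rho_adj_rho Vell rho_adj_ell2 that(2) by metis
    also have "\<dots> = (\<lambda>y. - rho_adj g (V k) y)" using K[OF that] rho_adj_uminus by simp
    finally show ?thesis .
  qed
  have KW: "W (rho_adj g k) = (\<lambda>y. - rho_adj g (W k) y)" if "\<mu> g \<noteq> 0" "k \<in> ell2" for g k
  proof -
    have Wk: "W k \<in> ell2" using Well that(2) .
    have "V (rho_adj g (W k)) = (\<lambda>y. - rho_adj g k y)" using K'[OF that(1) Wk] inv that(2) by simp
    hence "W (V (rho_adj g (W k))) = W (\<lambda>y. - rho_adj g k y)" by simp
    hence "rho_adj g (W k) = (\<lambda>y. - W (rho_adj g k) y)"
      using inv1 rho_adj_ell2[OF Wk] bop_uminus[OF bW] by simp
    thus ?thesis by auto
  qed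
  show ?thesis
  proof (intro equalityI subsetI)
    fix T assume "T \<in> {T. bounded_op T \<and> markov_op \<mu> T = (\<lambda>f y. - T f y)}"
    hence bT: "bounded_op T" and mT: "markov_op \<mu> T = (\<lambda>f y. - T f y)" by auto
    have T0: "T (\<lambda>x. 0) = (\<lambda>x. 0)" by (rule bop_zero[OF bT])
    define A where "A = T \<circ> W"
    have bA: "bounded_op A" unfolding A_def by (rule bop_comp[OF bT bW])
    have mA: "markov_op \<mu> A = A"
    proof (intro ext)
      fix f y
      show "markov_op \<mu> A f y = A f y"
      proof (cases "f \<in> ell2")
        case True
        have "markov_op \<mu> A f y = infsum (\<lambda>g. of_real (\<mu> g) * rho g (T (W (rho_adj g f))) y) UNIV"
          using True unfolding markov_op_def A_def by simp
        also have "\<dots> = infsum (\<lambda>g. - (of_real (\<mu> g) * rho g (T (rho_adj g (W f))) y)) UNIV"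
        proof (rule infsum_cong)
          fix g show "of_real (\<mu> g) * rho g (T (W (rho_adj g f))) y = - (of_real (\<mu> g) * rho g (T (rho_adj g (W f))) y)"
          proof (cases "\<mu> g = 0")
            case False
            show ?thesis by (simp add: KW[OF False True] bop_uminus[OF bT] rho_uminus)
          qed simp
        qed
        also have "\<dots> = - markov_op \<mu> T (W f) y"
          unfolding infsum_uminus markov_op_def using Well[OF True] by simp
        also have "\<dots> = A f y" using mT unfolding A_def by simp
        finally show ?thesis .
      next
        case False
        thus ?thesis unfolding markov_op_def A_def using W0 T0 by simp
      qed
    qed
    have "T = A \<circ> V"
    proof
      fix f show "T f = (A \<circ> V) f"
      proof (cases "f \<in> ell2")
        case True thus ?thesis unfolding A_def using inv1 by simp
      next
        case False
        have "T f = (\<lambda>x. 0)" using bT False unfolding bounded_op_def by auto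
        thus ?thesis unfolding A_def by (simp add: V0[OF False] bop_zero[OF bW] T0)
      qed
    qed
    thus "T \<in> {A \<circ> V | A. bounded_op A \<and> markov_op \<mu> A = A}" using bA mA by blast
  next
    fix T assume "T \<in> {A \<circ> V | A. bounded_op A \<and> markov_op \<mu> A = A}"
    then obtain A where T: "T = A \<circ> V" and bA: "bounded_op A" and mA: "markov_op \<mu> A = A" by auto
    have A0: "A (\<lambda>x. 0) = (\<lambda>x. 0)" by (rule bop_zero[OF bA])
    have bT: "bounded_op T" unfolding T by (rule bop_comp[OF bA bV])
    have mT: "markov_op \<mu> T = (\<lambda>f y. - T f y)"
    proof (intro ext)
      fix f y
      show "markov_op \<mu> T f y = - T f y"
      proof (cases "f \<in> ell2")
        case True
        have "markov_op \<mu> T f y = infsum (\<lambda>g. of_real (\<mu> g) * rho g (A (V (rho_adj g f))) y) UNIV"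
          using True unfolding markov_op_def T by simp
        also have "\<dots> = infsum (\<lambda>g. - (of_real (\<mu> g) * rho g (A (rho_adj g (V f))) y)) UNIV"
        proof (rule infsum_cong)
          fix g show "of_real (\<mu> g) * rho g (A (V (rho_adj g f))) y = - (of_real (\<mu> g) * rho g (A (rho_adj g (V f))) y)"
          proof (cases "\<mu> g = 0")
            case False
            show ?thesis by (simp add: K'[OF False True] bop_uminus[OF bA] rho_uminus)
          qed simp
        qed
        also have "\<dots> = - markov_op \<mu> A (V f) y"
          unfolding infsum_uminus markov_op_def using Vell[OF True] by simp
        also have "\<dots> = - T f y" using mA unfolding T by simp
        finally show ?thesis .
      next
        case False
        thus ?thesis unfolding markov_op_def T using V0 A0 by simp
      qed
    qed
    show "T \<in> {T. bounded_op T \<and> markov_op \<mu> T = (\<lambda>f y. - T f y)}" using bT mT by simp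
  qed
qed

end
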